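(* For all integers $D$ and $a$ there exists $T$ such that if $G$ is a clique-sum of graphs each having at most $a$ vertices of degree greater than $D$, then $G$ has $\infty$-admissibility at most $T$.
   Context: All graphs are finite and simple. Given an ordering $v_1,\ldots,v_n$ of $V(G)$, the $\infty$-backconnectivity of $v_k$ is the maximum number of paths (of any length) from $v_k$ to $\{v_1,\ldots,v_{k-1}\}$ that pairwise intersect only in $v_k$. The $\infty$-admissibility of the ordering is the maximum $\infty$-backconnectivity of its vertices, and the $\infty$-admissibility of $G$ is the minimum over all orderings. A clique-sum of $G_1$ and $G_2$ is obtained by identifying the vertices of a clique in $G_1$ with those of an equal-size clique in $G_2$ and possibly deleting some edges; a clique-sum of several graphs is obtained by repeated clique-sums. *)

theory Defs
  imports Main
begin

definition graph :: "'a set \<Rightarrow> 'a set set \<Rightarrow> bool" where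
  "graph V E \<longleftrightarrow> finite V \<and> (\<forall>e\<in>E. \<exists>u v. e = {u, v} \<and> u \<noteq> v \<and> u \<in> V \<and> v \<in> V)"

definition degree :: "'a set set \<Rightarrow> 'a \<Rightarrow> nat" where
  "degree E v = card {u. {u, v} \<in> E}"

definition is_clique :: "'a set set \<Rightarrow> 'a set \<Rightarrow> bool" where
  "is_clique E K \<longleftrightarrow> (\<forall>u\<in>K. \<forall>v\<in>K. u \<noteq> v \<longrightarrow> {u, v} \<in> E)"

text \<open>Repeated clique-sums of graphs satisfying P. Vertices are labelled so that
  the two summands share exactly the identified clique K; afterwards any set of
  edges inside K may be deleted.\<close>
inductive clique_sum_of :: "('a set \<Rightarrow> 'a set set \<Rightarrow> bool) \<Rightarrow> 'a set \<Rightarrow> 'a set set \<Rightarrow> bool"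
  for P where
  base: "graph V E \<Longrightarrow> P V E \<Longrightarrow> clique_sum_of P V E"
| sum: "clique_sum_of P V1 E1 \<Longrightarrow> clique_sum_of P V2 E2 \<Longrightarrow> K = V1 \<inter> V2 \<Longrightarrow>
        is_clique E1 K \<Longrightarrow> is_clique E2 K \<Longrightarrow> F \<subseteq> {e. e \<subseteq> K} \<Longrightarrow>
        clique_sum_of P (V1 \<union> V2) ((E1 \<union> E2) - F)"

definition is_path :: "'a set \<Rightarrow> 'a set set \<Rightarrow> 'a list \<Rightarrow> bool" where
  "is_path V E p \<longleftrightarrow> p \<noteq> [] \<and> distinct p \<and> set p \<subseteq> V \<and>
     (\<forall>i. Suc i < length p \<longrightarrow> {p ! i, p ! Suc i} \<in> E)"

definition fan :: "'a set \<Rightarrow> 'a set set \<Rightarrow> 'a \<Rightarrow> 'a set \<Rightarrow> 'a list set \<Rightarrow> bool" where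
  "fan V E v S Ps \<longleftrightarrow>
     (\<forall>p\<in>Ps. is_path V E p \<and> hd p = v \<and> last p \<in> S) \<and>
     (\<forall>p\<in>Ps. \<forall>q\<in>Ps. p \<noteq> q \<longrightarrow> set p \<inter> set q = {v})"

definition is_ordering :: "'a set \<Rightarrow> 'a list \<Rightarrow> bool" where
  "is_ordering V vs \<longleftrightarrow> distinct vs \<and> set vs = V"

text \<open>infinity-backconnectivity of the k-th vertex (0-indexed) of ordering vs.\<close>
definition backconn :: "'a set \<Rightarrow> 'a set set \<Rightarrow> 'a list \<Rightarrow> nat \<Rightarrow> nat" where
  "backconn V E vs k = Max {card Ps | Ps. fan V E (vs ! k) (set (take k vs)) Ps}"

definition adm_ordering :: "'a set \<Rightarrow> 'a set set \<Rightarrow> 'a list \<Rightarrow> nat" where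
  "adm_ordering V E vs = Max (insert 0 {backconn V E vs k | k. k < length vs})"

definition inf_admissibility :: "'a set \<Rightarrow> 'a set set \<Rightarrow> nat" where
  "inf_admissibility V E = Min {adm_ordering V E vs | vs. is_ordering V vs}"

end

theory Submission imports Defs begin


lemma succ_nth: "successively P xs \<longleftrightarrow> (\<forall>i. Suc i < length xs \<longrightarrow> P (xs!i) (xs!Suc i))"
proof (induction P xs rule: successively.induct)
  case (3 P x y xs)
  show ?case
  proof
    assume "successively P (x # y # xs)"
    then show "\<forall>i. Suc i < length (x # y # xs) \<longrightarrow> P ((x # y # xs) ! i) ((x # y # xs) ! Suc i)"
      using 3 by (auto simp: less_Suc_eq_0_disj)
  next
    assume H: "\<forall>i. Suc i < length (x # y # xs) \<longrightarrow> P ((x # y # xs) ! i) ((x # y # xs) ! Suc i)"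
    have "P x y" using H[rule_format, of 0] by simp
    moreover have "\<forall>i. Suc i < length (y # xs) \<longrightarrow> P ((y # xs) ! i) ((y # xs) ! Suc i)"
      using H by (metis Suc_less_eq length_Cons nth_Cons_Suc)
    ultimately show "successively P (x # y # xs)" using 3 by simp
  qed
qed auto

lemma is_path_succ: "is_path V E p \<longleftrightarrow> p \<noteq> [] \<and> distinct p \<and> set p \<subseteq> V \<and> successively (\<lambda>x y. {x,y} \<in> E) p"
  unfolding is_path_def succ_nth by auto

lemma last_filter: "xs \<noteq> [] \<Longrightarrow> P (last xs) \<Longrightarrow> last (filter P xs) = last xs"
  by (induction xs) (auto simp: filter_empty_conv)

lemma filter_succ:
  assumes E1: "\<forall>e\<in>E1. e \<subseteq> V1" and E2: "\<forall>e\<in>E2. e \<subseteq> V2"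
    and K: "is_clique E1 (V1 \<inter> V2)"
  shows "p \<noteq> [] \<Longrightarrow> distinct p \<Longrightarrow> successively (\<lambda>x y. {x,y} \<in> E1 \<union> E2) p \<Longrightarrow> last p \<in> V1 \<Longrightarrow>
    successively (\<lambda>x y. {x,y} \<in> E1) (filter (\<lambda>x. x \<in> V1) p) \<and> filter (\<lambda>x. x \<in> V1) p \<noteq> [] \<and>
    (hd p \<notin> V1 \<longrightarrow> hd (filter (\<lambda>x. x \<in> V1) p) \<in> V1 \<inter> V2)"
proof (induction p)
  case Nil then show ?case by simp
next
  case (Cons x rest)
  show ?case
  proof (cases "rest = []")
    case True then show ?thesis using Cons by auto
  next
    case False
    then obtain y ys where r: "rest = y # ys" by (cases rest) auto
    have edge: "{x,y} \<in> E1 \<union> E2" using Cons.prems r by simp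
    have IH: "successively (\<lambda>x y. {x,y} \<in> E1) (filter (\<lambda>x. x \<in> V1) rest) \<and> filter (\<lambda>x. x \<in> V1) rest \<noteq> [] \<and>
    (hd rest \<notin> V1 \<longrightarrow> hd (filter (\<lambda>x. x \<in> V1) rest) \<in> V1 \<inter> V2)"
      using Cons False by (auto simp: successively_Cons)
    have xnot: "x \<notin> set rest" using Cons.prems by simp
    have hdin: "hd (filter (\<lambda>x. x \<in> V1) rest) \<in> set rest"
      using IH by (metis filter_is_subset hd_in_set subsetD)
    show ?thesis
    proof (cases "x \<in> V1")
      case True
      have "{x, hd (filter (\<lambda>x. x \<in> V1) rest)} \<in> E1"
      proof (cases "y \<in> V1")
        case True
        have hf: "hd (filter (\<lambda>x. x \<in> V1) rest) = y" using r True by simp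
        show ?thesis
        proof (cases "{x,y} \<in> E1")
          case True then show ?thesis using hf by simp
        next
          case False
          then have "{x,y} \<in> E2" using edge by auto
          then have "x \<in> V2" "y \<in> V2" using E2 by auto
          moreover have "x \<noteq> y" using xnot r by auto
          ultimately show ?thesis using K \<open>x \<in> V1\<close> \<open>y \<in> V1\<close> hf unfolding is_clique_def by auto
        qed
      next
        case False
        then have "{x,y} \<notin> E1" using E1 by auto
        then have "{x,y} \<in> E2" using edge by auto
        then have "x \<in> V2" using E2 by auto
        moreover have "hd (filter (\<lambda>x. x \<in> V1) rest) \<in> V1 \<inter> V2" using IH r False by simp
        moreover have "x \<noteq> hd (filter (\<lambda>x. x \<in> V1) rest)" using xnot hdin by auto
        ultimately show ?thesis using K \<open>x \<in> V1\<close> unfolding is_clique_def by auto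
      qed
      then show ?thesis using IH True by (auto simp: successively_Cons)
    next
      case False
      have "hd (filter (\<lambda>x. x \<in> V1) rest) \<in> V1 \<inter> V2"
      proof (cases "y \<in> V1")
        case True
        have "{x,y} \<notin> E1" using E1 False by auto
        then have "{x,y} \<in> E2" using edge by auto
        then have "y \<in> V2" using E2 by auto
        then show ?thesis using r True by simp
      next
        case False then show ?thesis using IH r by simp
      qed
      then show ?thesis using IH False by simp
    qed
  qed
qed


lemma fan_card_le_S:
  assumes "fan V E v S Ps" "v \<notin> S" "finite S"
  shows "card Ps \<le> card S"
proof -
  have "inj_on last Ps"
  proof (rule inj_onI)
    fix p q assume pq: "p \<in> Ps" "q \<in> Ps" "last p = last q"
    show "p = q"
    proof (rule ccontr)
      assume "p \<noteq> q"
      then have "set p \<inter> set q = {v}" using assms(1) pq unfolding fan_def by blast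
      moreover have "p \<noteq> []" "q \<noteq> []" using assms(1) pq unfolding fan_def is_path_def by auto
      ultimately have "last p = v" using pq(3) by (metis IntI last_in_set singletonD)
      then show False using assms pq unfolding fan_def by auto
    qed
  qed
  moreover have "last ` Ps \<subseteq> S" using assms(1) unfolding fan_def by auto
  ultimately show ?thesis using assms(3) card_inj_on_le by blast
qed

lemma fan_card_le_k:
  assumes "fan V E (vs!k) (set (take k vs)) Ps" "distinct vs" "k < length vs"
  shows "card Ps \<le> k"
proof -
  have "distinct (take k vs @ vs!k # drop (Suc k) vs)" using assms(2,3) id_take_nth_drop by metis
  then have "vs!k \<notin> set (take k vs)" by simp
  then have "card Ps \<le> card (set (take k vs))" using fan_card_le_S[OF assms(1)] by auto
  also have "\<dots> \<le> k" by (metis card_length length_take min.bounded_iff)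
  finally show ?thesis .
qed

lemma backconn_ge:
  assumes "fan V E (vs!k) (set (take k vs)) Ps" "distinct vs" "k < length vs"
  shows "card Ps \<le> backconn V E vs k"
proof -
  have "{card Ps | Ps. fan V E (vs ! k) (set (take k vs)) Ps} \<subseteq> {..k}"
    using fan_card_le_k assms(2,3) by auto
  then have "finite {card Ps | Ps. fan V E (vs ! k) (set (take k vs)) Ps}" by (rule finite_subset) auto
  then show ?thesis unfolding backconn_def using assms(1) by (intro Max_ge) auto
qed

lemma backconn_le:
  assumes "\<And>Ps. fan V E (vs!k) (set (take k vs)) Ps \<Longrightarrow> card Ps \<le> B" "distinct vs" "k < length vs"
  shows "backconn V E vs k \<le> B"
proof -
  have "{card Ps | Ps. fan V E (vs ! k) (set (take k vs)) Ps} \<subseteq> {..k}"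
    using fan_card_le_k assms(2,3) by auto
  then have "finite {card Ps | Ps. fan V E (vs ! k) (set (take k vs)) Ps}" by (rule finite_subset) auto
  moreover have "fan V E (vs ! k) (set (take k vs)) {}" unfolding fan_def by auto
  ultimately show ?thesis unfolding backconn_def using assms(1) by (subst Max_le_iff) auto
qed

lemma fan_mono: "fan V E v S Ps \<Longrightarrow> E \<subseteq> E' \<Longrightarrow> fan V E' v S Ps"
  unfolding fan_def is_path_def by blast

lemma fan_deg:
  assumes "fan V E v S Ps" "v \<notin> S" "finite V" "\<forall>e\<in>E. e \<subseteq> V"
  shows "card Ps \<le> degree E v"
proof -
  have P: "\<And>p. p \<in> Ps \<Longrightarrow> length p \<ge> 2 \<and> p!0 = v \<and> {p!0, p!1} \<in> E \<and> p!1 \<noteq> v \<and> p!1 \<in> set p"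
  proof -
    fix p assume p: "p \<in> Ps"
    then have ip: "is_path V E p" "hd p = v" "last p \<in> S" using assms(1) unfolding fan_def by auto
    then have ne: "p \<noteq> []" unfolding is_path_def by auto
    have "length p \<noteq> 1"
    proof
      assume "length p = 1"
      then have "last p = hd p" by (metis One_nat_def hd_conv_nth last_conv_nth ne diff_Suc_1)
      then show False using ip assms(2) by auto
    qed
    moreover have "length p \<noteq> 0" using ne by simp
    ultimately have l2: "length p \<ge> 2" by arith
    have "p!0 = v" using ip ne by (simp add: hd_conv_nth)
    moreover have "{p!0, p!1} \<in> E" using ip(1) l2 unfolding is_path_def by auto
    moreover have "p!1 \<noteq> p!0" using ip(1) l2 unfolding is_path_def by (simp add: nth_eq_iff_index_eq)
    ultimately show "length p \<ge> 2 \<and> p!0 = v \<and> {p!0, p!1} \<in> E \<and> p!1 \<noteq> v \<and> p!1 \<in> set p"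
      using l2 by auto
  qed
  have "inj_on (\<lambda>p. p!1) Ps"
  proof (rule inj_onI)
    fix p q assume pq: "p \<in> Ps" "q \<in> Ps" "p!1 = q!1"
    show "p = q"
    proof (rule ccontr)
      assume "p \<noteq> q"
      then have "set p \<inter> set q = {v}" using assms(1) pq unfolding fan_def by blast
      then show False using P[OF pq(1)] P[OF pq(2)] pq(3) by auto
    qed
  qed
  moreover have "(\<lambda>p. p!1) ` Ps \<subseteq> {u. {u, v} \<in> E}"
  proof
    fix x assume "x \<in> (\<lambda>p. p!1) ` Ps"
    then obtain p where "p \<in> Ps" "x = p!1" by auto
    then show "x \<in> {u. {u, v} \<in> E}" using P[of p] by (auto simp: insert_commute)
  qed
  moreover have "finite {u. {u, v} \<in> E}"
    using assms(3,4) by (rule_tac finite_subset[of _ V]) auto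
  ultimately show ?thesis unfolding degree_def using card_inj_on_le by blast
qed

lemma fan_map:
  assumes "fan V E v S Ps" "v \<notin> S'"
    "\<And>p. p \<in> Ps \<Longrightarrow> set (f p) \<subseteq> set p \<and> is_path V' E' (f p) \<and> hd (f p) = v \<and> last (f p) \<in> S'"
  shows "fan V' E' v S' (f ` Ps) \<and> card (f ` Ps) = card Ps"
proof -
  have ne: "\<And>p. p \<in> Ps \<Longrightarrow> f p \<noteq> []" using assms(3) unfolding is_path_def by auto
  have disj: "\<And>p q. p \<in> Ps \<Longrightarrow> q \<in> Ps \<Longrightarrow> p \<noteq> q \<Longrightarrow> set (f p) \<inter> set (f q) \<subseteq> {v}"
    using assms(1,3) unfolding fan_def by blast
  have inj: "inj_on f Ps"
  proof (rule inj_onI)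
    fix p q assume pq: "p \<in> Ps" "q \<in> Ps" "f p = f q"
    show "p = q"
    proof (rule ccontr)
      assume "p \<noteq> q"
      then have "set (f p) \<subseteq> {v}" using disj[OF pq(1,2)] pq(3) by auto
      then have "last (f p) = v" using ne[OF pq(1)] by (meson last_in_set singletonD subsetD)
      then show False using assms(2) assms(3)[OF pq(1)] by auto
    qed
  qed
  have "fan V' E' v S' (f ` Ps)"
    unfolding fan_def
  proof (intro conjI ballI impI)
    fix a b assume ab: "a \<in> f ` Ps" "b \<in> f ` Ps" "a \<noteq> b"
    then obtain p q where "p \<in> Ps" "q \<in> Ps" "a = f p" "b = f q" "p \<noteq> q" by auto
    moreover have "v \<in> set (f p)" "v \<in> set (f q)" using calculation assms(3) ne
      by (metis hd_in_set)+
    ultimately show "set a \<inter> set b = {v}" using disj by blast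
  qed (use assms(3) in auto)
  then show ?thesis using inj card_image by blast
qed

lemma trunc:
  assumes "is_path V E p" "hd p \<notin> S" "last p \<in> S"
  shows "\<exists>p'. is_path V E p' \<and> set p' \<subseteq> set p \<and> hd p' = hd p \<and> last p' \<in> S \<and> length p' \<ge> 2
     \<and> (\<forall>i < length p' - 1. p'!i \<notin> S)"
proof -
  have ne: "p \<noteq> []" using assms unfolding is_path_def by auto
  define n where "n = (LEAST i. i < length p \<and> p!i \<in> S)"
  have ex: "length p - 1 < length p \<and> p!(length p - 1) \<in> S" using ne assms(3) by (simp add: last_conv_nth)
  have n1: "n < length p \<and> p!n \<in> S" unfolding n_def using LeastI_ex ex by (rule_tac LeastI) auto
  have n2: "\<And>i. i < n \<Longrightarrow> p!i \<notin> S"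
    using n1 not_less_Least unfolding n_def by (metis less_trans)
  have "n \<noteq> 0" using n1 assms(2) ne by (cases n) (auto simp: hd_conv_nth)
  define p' where "p' = take (Suc n) p"
  have lp: "length p' = Suc n" using n1 unfolding p'_def by simp
  have "is_path V E p'" using assms(1) n1 unfolding p'_def is_path_def
    by (auto dest: in_set_takeD)
  moreover have "set p' \<subseteq> set p" unfolding p'_def by (rule set_take_subset)
  moreover have "hd p' = hd p" unfolding p'_def using ne by (simp add: hd_conv_nth)
  moreover have "last p' \<in> S" using n1 lp unfolding p'_def by (subst last_conv_nth) auto
  moreover have "\<forall>i < length p' - 1. p'!i \<notin> S" using n2 lp unfolding p'_def by auto
  ultimately show ?thesis using lp \<open>n \<noteq> 0\<close> by (intro exI[of _ p']) auto
qed


lemma nth_notin_take: "distinct vs \<Longrightarrow> k < length vs \<Longrightarrow> vs!k \<notin> set (take k vs)"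
proof -
  assume "distinct vs" "k < length vs"
  then have "distinct (take k vs @ vs!k # drop (Suc k) vs)" using id_take_nth_drop by metis
  then show ?thesis by simp
qed

lemma card_take_le: "distinct xs \<Longrightarrow> set (take (card A) xs) = A \<Longrightarrow> card A \<le> length xs"
  by (metis distinct_card distinct_take length_take min.absorb_iff1 min.commute)

lemma hd_filter: "xs \<noteq> [] \<Longrightarrow> P (hd xs) \<Longrightarrow> hd (filter P xs) = hd xs"
  by (cases xs) auto

lemma filter_path:
  assumes E1: "\<forall>e\<in>E1. e \<subseteq> V1" and E2: "\<forall>e\<in>E2. e \<subseteq> V2"
    and K: "is_clique E1 (V1 \<inter> V2)"
    and p: "is_path V E p" "E = E1 \<union> E2" "hd p \<in> V1" "last p \<in> V1"
  shows "is_path V1 E1 (filter (\<lambda>x. x \<in> V1) p) \<and> hd (filter (\<lambda>x. x \<in> V1) p) = hd p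
     \<and> last (filter (\<lambda>x. x \<in> V1) p) = last p \<and> set (filter (\<lambda>x. x \<in> V1) p) \<subseteq> set p"
proof -
  have pp: "p \<noteq> []" "distinct p" "successively (\<lambda>x y. {x,y} \<in> E1 \<union> E2) p"
    using p(1,2) unfolding is_path_succ by auto
  from filter_succ[OF E1 E2 K pp p(4)] show ?thesis
    using pp p(3,4) by (auto simp: is_path_succ hd_filter last_filter)
qed

lemma step:
  assumes E1: "\<forall>e\<in>E1s. e \<subseteq> V1" and E2: "\<forall>e\<in>E2s. e \<subseteq> V2"
  and K: "K = V1 \<inter> V2" and Kc1: "is_clique E1s K" and Kc2: "is_clique E2s K"
  and o1: "is_ordering V1 vs1" and q1: "set (take (card Q) vs1) = Q"
  and b1: "\<forall>k<length vs1. card Q \<le> k \<longrightarrow> backconn V1 E1s vs1 k \<le> T"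
  and o2: "is_ordering V2 vs2" and q2: "set (take (card K) vs2) = K"
  and b2: "\<forall>k<length vs2. card K \<le> k \<longrightarrow> backconn V2 E2s vs2 k \<le> T"
  shows "is_ordering (V1\<union>V2) (vs1 @ drop (card K) vs2) \<and> set (take (card Q) (vs1 @ drop (card K) vs2)) = Q
    \<and> (\<forall>k<length (vs1 @ drop (card K) vs2). card Q \<le> k \<longrightarrow>
          backconn (V1\<union>V2) (E1s\<union>E2s) (vs1 @ drop (card K) vs2) k \<le> T)"
proof -
  define vs where "vs = vs1 @ drop (card K) vs2"
  have d1: "distinct vs1" "set vs1 = V1" using o1 unfolding is_ordering_def by auto
  have d2: "distinct vs2" "set vs2 = V2" using o2 unfolding is_ordering_def by auto
  have cK: "card K \<le> length vs2" using card_take_le d2 q2 by blast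
  have cQ: "card Q \<le> length vs1" using card_take_le d1 q1 by blast
  have sd: "set (drop (card K) vs2) = V2 - K"
  proof -
    have "distinct (take (card K) vs2 @ drop (card K) vs2)" using d2 by simp
    then have "set (take (card K) vs2) \<inter> set (drop (card K) vs2) = {}" unfolding distinct_append by blast
    moreover have "set vs2 = set (take (card K) vs2) \<union> set (drop (card K) vs2)"
      by (metis append_take_drop_id set_append)
    ultimately show ?thesis using d2 q2 by auto
  qed
  have ord: "is_ordering (V1\<union>V2) vs" unfolding vs_def is_ordering_def
    using d1 d2 sd K by auto
  have dvs: "distinct vs" using ord unfolding is_ordering_def by auto
  have tq: "set (take (card Q) vs) = Q" using cQ q1 unfolding vs_def by simp
  have E1': "is_clique E1s (V1 \<inter> V2)" "is_clique E2s (V2 \<inter> V1)" using Kc1 Kc2 K by (auto simp: Int_commute)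
  have bnd: "backconn (V1\<union>V2) (E1s\<union>E2s) vs k \<le> T" if k: "k < length vs" "card Q \<le> k" for k
  proof (rule backconn_le[OF _ dvs k(1)])
    fix Ps assume fan: "fan (V1 \<union> V2) (E1s \<union> E2s) (vs ! k) (set (take k vs)) Ps"
    have vnot: "vs!k \<notin> set (take k vs)" using nth_notin_take dvs k(1) by blast
    show "card Ps \<le> T"
    proof (cases "k < length vs1")
      case True
      have vk: "vs!k = vs1!k" "take k vs = take k vs1" using True unfolding vs_def by (auto simp: nth_append)
      have vV1: "vs1!k \<in> V1" using True d1 by auto
      have SV1: "set (take k vs1) \<subseteq> V1" using d1 set_take_subset by metis
      have "fan V1 E1s (vs1!k) (set (take k vs1)) ((filter (\<lambda>x. x \<in> V1)) ` Ps) \<and> card ((filter (\<lambda>x. x \<in> V1)) ` Ps) = card Ps"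
      proof (rule fan_map)
        show "fan (V1 \<union> V2) (E1s \<union> E2s) (vs1 ! k) (set (take k vs1)) Ps" using fan vk by simp
        show "vs1 ! k \<notin> set (take k vs1)" using vnot vk by simp
        fix p assume "p \<in> Ps"
        then have p: "is_path (V1 \<union> V2) (E1s \<union> E2s) p" "hd p = vs1!k" "last p \<in> set (take k vs1)"
          using fan vk unfolding fan_def by auto
        show "set (filter (\<lambda>x. x \<in> V1) p) \<subseteq> set p \<and> is_path V1 E1s (filter (\<lambda>x. x \<in> V1) p) \<and>
          hd (filter (\<lambda>x. x \<in> V1) p) = vs1 ! k \<and> last (filter (\<lambda>x. x \<in> V1) p) \<in> set (take k vs1)"
          using filter_path[OF E1 E2 E1'(1) p(1) refl] p vV1 SV1 by auto
      qed
      then have "card Ps \<le> backconn V1 E1s vs1 k" using backconn_ge d1 True by metis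
      also have "\<dots> \<le> T" using b1 True k by auto
      finally show ?thesis .
    next
      case False
      define i where "i = k - length vs1"
      define j where "j = card K + i"
      have jl: "j < length vs2" using k False cK unfolding vs_def i_def j_def by auto
      have vk: "vs!k = vs2!j" using False cK k unfolding vs_def i_def j_def by (auto simp: nth_append)
      have Sk: "set (take k vs) = V1 \<union> set (take i (drop (card K) vs2))"
        using False d1 unfolding vs_def i_def by auto
      have S2: "set (take j vs2) = K \<union> set (take i (drop (card K) vs2))"
        unfolding j_def take_add using q2 by simp
      have vV2: "vs2!j \<in> V2" using jl d2 by auto
      have SV2: "set (take k vs) \<inter> V2 \<subseteq> set (take j vs2)" using Sk S2 K by auto
      have "\<forall>p\<in>Ps. \<exists>p'. is_path (V1 \<union> V2) (E1s \<union> E2s) p' \<and> set p' \<subseteq> set p \<and> hd p' = hd p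
          \<and> last p' \<in> set (take k vs) \<and> length p' \<ge> 2 \<and> (\<forall>i < length p' - 1. p'!i \<notin> set (take k vs))"
      proof
        fix p assume "p \<in> Ps"
        then have "is_path (V1 \<union> V2) (E1s \<union> E2s) p" "hd p \<notin> set (take k vs)" "last p \<in> set (take k vs)"
          using fan vnot unfolding fan_def by auto
        then show "\<exists>p'. is_path (V1 \<union> V2) (E1s \<union> E2s) p' \<and> set p' \<subseteq> set p \<and> hd p' = hd p
          \<and> last p' \<in> set (take k vs) \<and> length p' \<ge> 2 \<and> (\<forall>i < length p' - 1. p'!i \<notin> set (take k vs))"
          by (rule trunc)
      qed
      then obtain g where g: "\<And>p. p \<in> Ps \<Longrightarrow> is_path (V1 \<union> V2) (E1s \<union> E2s) (g p) \<and> set (g p) \<subseteq> set p \<and> hd (g p) = hd p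
          \<and> last (g p) \<in> set (take k vs) \<and> length (g p) \<ge> 2 \<and> (\<forall>i < length (g p) - 1. (g p)!i \<notin> set (take k vs))"
        by metis
      have "fan V2 E2s (vs2!j) (set (take j vs2)) ((\<lambda>p. filter (\<lambda>x. x \<in> V2) (g p)) ` Ps)
         \<and> card ((\<lambda>p. filter (\<lambda>x. x \<in> V2) (g p)) ` Ps) = card Ps"
      proof (rule fan_map)
        show "fan (V1 \<union> V2) (E1s \<union> E2s) (vs2 ! j) (set (take k vs)) Ps" using fan vk by simp
        show "vs2 ! j \<notin> set (take j vs2)" using nth_notin_take d2 jl by blast
        fix p assume pP: "p \<in> Ps"
        have hp: "hd p = vs2!j" using pP fan vk unfolding fan_def by auto
        note gp = g[OF pP]
        define L where "L = length (g p)"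
        have L2: "L \<ge> 2" using gp L_def by auto
        have w: "g p ! (L - 2) \<notin> V1" using gp L2 Sk unfolding L_def by auto
        have "{g p ! (L-2), g p ! Suc (L-2)} \<in> E1s \<union> E2s"
          using gp L2 unfolding is_path_def L_def by auto
        moreover have "Suc (L-2) = L - 1" using L2 by arith
        ultimately have ed: "{g p ! (L-2), g p ! (L-1)} \<in> E1s \<union> E2s" by simp
        have "{g p ! (L-2), g p ! (L-1)} \<notin> E1s" using w E1 by auto
        then have "{g p ! (L-2), g p ! (L-1)} \<in> E2s" using ed by auto
        then have "g p ! (L-1) \<in> V2" using E2 by auto
        then have lV2: "last (g p) \<in> V2" using L2 unfolding L_def by (subst last_conv_nth) auto
        have "is_path (V1 \<union> V2) (E2s \<union> E1s) (g p)" using gp by (simp add: Un_commute)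
        from filter_path[OF E2 E1 E1'(2) this refl] gp hp vV2 lV2 SV2
        show "set (filter (\<lambda>x. x \<in> V2) (g p)) \<subseteq> set p \<and> is_path V2 E2s (filter (\<lambda>x. x \<in> V2) (g p)) \<and>
          hd (filter (\<lambda>x. x \<in> V2) (g p)) = vs2 ! j \<and> last (filter (\<lambda>x. x \<in> V2) (g p)) \<in> set (take j vs2)"
          by auto
      qed
      then have "card Ps \<le> backconn V2 E2s vs2 j" using backconn_ge d2 jl by metis
      also have "\<dots> \<le> T" using b2 jl unfolding j_def by auto
      finally show ?thesis .
    qed
  qed
  show ?thesis using ord tq bnd unfolding vs_def by auto
qed




definition good :: "nat \<Rightarrow> 'a set \<Rightarrow> 'a set set \<Rightarrow> 'a set \<Rightarrow> bool" where
  "good T V Es Q \<longleftrightarrow> (\<exists>vs. is_ordering V vs \<and> set (take (card Q) vs) = Q \<and>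
       (\<forall>k<length vs. card Q \<le> k \<longrightarrow> backconn V Es vs k \<le> T))"

definition inv :: "nat \<Rightarrow> 'a set \<Rightarrow> 'a set set \<Rightarrow> bool" where
 "inv T V E \<longleftrightarrow> finite V \<and> (\<exists>Es. E \<subseteq> Es \<and> (\<forall>e\<in>Es. e \<subseteq> V) \<and>
    (\<forall>Q. Q \<subseteq> V \<longrightarrow> is_clique E Q \<longrightarrow> good T V Es Q))"

lemma clique_mono: "is_clique E Q \<Longrightarrow> E \<subseteq> E' \<Longrightarrow> is_clique E' Q"
  unfolding is_clique_def by blast

lemma inv_sum:
  assumes i1: "inv T V1 E1" and i2: "inv T V2 E2" and K: "K = V1 \<inter> V2"
    and c1: "is_clique E1 K" and c2: "is_clique E2 K" and F: "F \<subseteq> {e. e \<subseteq> K}"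
  shows "inv T (V1 \<union> V2) ((E1 \<union> E2) - F)"
proof -
  obtain E1s where e1: "E1 \<subseteq> E1s" "\<forall>e\<in>E1s. e \<subseteq> V1" and
    h1: "\<And>Q. Q \<subseteq> V1 \<Longrightarrow> is_clique E1 Q \<Longrightarrow> good T V1 E1s Q" and f1: "finite V1"
    using i1 unfolding inv_def by blast
  obtain E2s where e2: "E2 \<subseteq> E2s" "\<forall>e\<in>E2s. e \<subseteq> V2" and
    h2: "\<And>Q. Q \<subseteq> V2 \<Longrightarrow> is_clique E2 Q \<Longrightarrow> good T V2 E2s Q" and f2: "finite V2"
    using i2 unfolding inv_def by blast
  have K1: "is_clique E1s K" "is_clique E2s K" using c1 c2 e1 e2 clique_mono by blast+
  have KV1: "K \<subseteq> V1" and KV2: "K \<subseteq> V2" using K by auto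
  have main: "good T (V1 \<union> V2) (E1s \<union> E2s) Q"
    if Q: "Q \<subseteq> V1 \<union> V2" "is_clique ((E1 \<union> E2) - F) Q" for Q
  proof -
    have QE: "\<And>u v. u \<in> Q \<Longrightarrow> v \<in> Q \<Longrightarrow> u \<noteq> v \<Longrightarrow> {u,v} \<in> E1 \<union> E2"
      using Q(2) unfolding is_clique_def by blast
    have split: "Q \<subseteq> V1 \<or> Q \<subseteq> V2"
    proof (rule ccontr)
      assume "\<not> (Q \<subseteq> V1 \<or> Q \<subseteq> V2)"
      then obtain x y where xy: "x \<in> Q" "x \<notin> V1" "y \<in> Q" "y \<notin> V2" by blast
      then have "x \<in> V2" "y \<in> V1" using Q(1) by auto
      then have "x \<noteq> y" using xy by auto
      then have "{x,y} \<in> E1 \<union> E2" using QE xy by auto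
      moreover have "{x,y} \<notin> E1" using e1 xy by blast
      moreover have "{x,y} \<notin> E2" using e2 xy by blast
      ultimately show False by blast
    qed
    show ?thesis
    proof (cases "Q \<subseteq> V1")
      case True
      have "is_clique E1 Q" unfolding is_clique_def
      proof (intro ballI impI)
        fix u v assume uv: "u \<in> Q" "v \<in> Q" "u \<noteq> v"
        show "{u,v} \<in> E1"
        proof (cases "{u,v} \<in> E1")
          case False
          then have "{u,v} \<in> E2" using QE uv by auto
          then have "{u,v} \<subseteq> V2" using e2 by blast
          then have "u \<in> K" "v \<in> K" using K True uv by auto
          then show ?thesis using c1 uv unfolding is_clique_def by auto
        qed
      qed
      then obtain vs1 where o1: "is_ordering V1 vs1" "set (take (card Q) vs1) = Q"
        "\<forall>k<length vs1. card Q \<le> k \<longrightarrow> backconn V1 E1s vs1 k \<le> T" using h1[OF True] unfolding good_def by blast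
      obtain vs2 where o2: "is_ordering V2 vs2" "set (take (card K) vs2) = K"
        "\<forall>k<length vs2. card K \<le> k \<longrightarrow> backconn V2 E2s vs2 k \<le> T" using h2[OF KV2 c2] unfolding good_def by blast
      show ?thesis using step[OF e1(2) e2(2) K K1 o1 o2] unfolding good_def by blast
    next
      case False
      then have Q2: "Q \<subseteq> V2" using split by auto
      have "is_clique E2 Q" unfolding is_clique_def
      proof (intro ballI impI)
        fix u v assume uv: "u \<in> Q" "v \<in> Q" "u \<noteq> v"
        show "{u,v} \<in> E2"
        proof (cases "{u,v} \<in> E2")
          case False
          then have "{u,v} \<in> E1" using QE uv by auto
          then have "{u,v} \<subseteq> V1" using e1 by blast
          then have "u \<in> K" "v \<in> K" using K Q2 uv by auto
          then show ?thesis using c2 uv unfolding is_clique_def by auto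
        qed
      qed
      then obtain vs2 where o2: "is_ordering V2 vs2" "set (take (card Q) vs2) = Q"
        "\<forall>k<length vs2. card Q \<le> k \<longrightarrow> backconn V2 E2s vs2 k \<le> T" using h2[OF Q2] unfolding good_def by blast
      obtain vs1 where o1: "is_ordering V1 vs1" "set (take (card K) vs1) = K"
        "\<forall>k<length vs1. card K \<le> k \<longrightarrow> backconn V1 E1s vs1 k \<le> T" using h1[OF KV1 c1] unfolding good_def by blast
      have K': "K = V2 \<inter> V1" using K by auto
      have VV: "V2 \<union> V1 = V1 \<union> V2" and EE: "E2s \<union> E1s = E1s \<union> E2s" by auto
      show ?thesis using step[OF e2(2) e1(2) K' K1(2) K1(1) o2 o1]
        unfolding good_def VV EE by blast
    qed
  qed
  have "(E1 \<union> E2) - F \<subseteq> E1s \<union> E2s" using e1 e2 by blast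
  moreover have "\<forall>e\<in>E1s \<union> E2s. e \<subseteq> V1 \<union> V2" using e1 e2 by blast
  ultimately show ?thesis unfolding inv_def
    using f1 f2 main by blast
qed


lemma clique_bound:
  assumes g: "graph V E" and h: "int (card {v \<in> V. int (degree E v) > D}) \<le> a"
    and Q: "Q \<subseteq> V" "is_clique E Q"
  shows "card Q \<le> nat a + nat D + 1"
proof (rule ccontr)
  assume c: "\<not> card Q \<le> nat a + nat D + 1"
  have fV: "finite V" and eV: "\<forall>e\<in>E. e \<subseteq> V" using g unfolding graph_def by auto
  have fQ: "finite Q" using Q fV finite_subset by blast
  have "Q \<subseteq> {v \<in> V. int (degree E v) > D}"
  proof
    fix v assume v: "v \<in> Q"
    have "Q - {v} \<subseteq> {u. {u, v} \<in> E}" using Q(2) v unfolding is_clique_def by auto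
    moreover have "finite {u. {u, v} \<in> E}" using fV eV by (rule_tac finite_subset[of _ V]) auto
    ultimately have "card (Q - {v}) \<le> degree E v" unfolding degree_def by (rule card_mono[rotated])
    moreover have "card (Q - {v}) = card Q - 1" using v fQ by simp
    ultimately have "degree E v > nat D" using c by linarith
    then show "v \<in> {v \<in> V. int (degree E v) > D}" using v Q(1) by auto
  qed
  then have "card Q \<le> card {v \<in> V. int (degree E v) > D}" using fV by (rule_tac card_mono) auto
  then show False using h c by linarith
qed

lemma inv_base:
  assumes g: "graph V E" and h: "int (card {v \<in> V. int (degree E v) > D}) \<le> a"
  shows "inv (2*nat D + 2*nat a + 1) V E"
proof -
  define T where "T = 2*nat D + 2*nat a + 1"
  define H where "H = {v \<in> V. int (degree E v) > D}"
  have fV: "finite V" and eV: "\<forall>e\<in>E. e \<subseteq> V" using g unfolding graph_def by auto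
  have HV: "H \<subseteq> V" unfolding H_def by auto
  have fH: "finite H" using HV fV finite_subset by blast
  have cH: "card H \<le> nat a" using h unfolding H_def by linarith
  have "good T V E Q" if Q: "Q \<subseteq> V" "is_clique E Q" for Q
  proof -
    have cQ: "card Q \<le> nat a + nat D + 1" using clique_bound[OF g h Q] .
    have fQ: "finite Q" using Q fV finite_subset by blast
    obtain qs where qs: "set qs = Q" "distinct qs" using finite_distinct_list[OF fQ] by blast
    obtain hs where hs: "set hs = H - Q" "distinct hs" using finite_distinct_list[of "H - Q"] fH by blast
    obtain ls where ls: "set ls = V - Q - H" "distinct ls" using finite_distinct_list[of "V - Q - H"] fV by blast
    define vs where "vs = qs @ hs @ ls"
    have ord: "is_ordering V vs" unfolding is_ordering_def vs_def using qs hs ls Q HV by auto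
    have dvs: "distinct vs" using ord unfolding is_ordering_def by auto
    have lq: "length qs = card Q" using qs distinct_card by metis
    have lh: "length hs = card (H - Q)" using hs distinct_card by metis
    have tk: "set (take (card Q) vs) = Q" unfolding vs_def using lq qs by simp
    have cHQ: "card (H - Q) \<le> nat a" using cH fH card_Diff_subset_Int
      by (metis card_mono Diff_subset order_trans)
    have "backconn V E vs k \<le> T" if k: "k < length vs" "card Q \<le> k" for k
    proof (rule backconn_le[OF _ dvs k(1)])
      fix Ps assume fan: "fan V E (vs ! k) (set (take k vs)) Ps"
      show "card Ps \<le> T"
      proof (cases "k < length qs + length hs")
        case True
        have "card Ps \<le> k" using fan_card_le_k[OF fan dvs k(1)] .
        then show ?thesis using True lq lh cQ cHQ unfolding T_def by linarith
      next
        case False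
        have f1: "\<not> k < length qs" "\<not> k - length qs < length hs" using False by auto
        have "vs ! k = (hs @ ls) ! (k - length qs)" unfolding vs_def using f1(1) nth_append by metis
        also have "\<dots> = ls ! (k - length qs - length hs)" using f1(2) nth_append by metis
        finally have "vs ! k = ls ! (k - length qs - length hs)" .
        moreover have "k - length qs - length hs < length ls" using False k unfolding vs_def by auto
        ultimately have "vs ! k \<in> set ls" by simp
        then have "vs ! k \<in> V" "vs ! k \<notin> H" using ls by auto
        then have "degree E (vs ! k) \<le> nat D" unfolding H_def by auto
        moreover have "card Ps \<le> degree E (vs ! k)"
          using fan_deg[OF fan nth_notin_take[OF dvs k(1)] fV eV] .
        ultimately show ?thesis unfolding T_def by linarith
      qed
    qed
    then show ?thesis unfolding good_def using ord tk by blast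
  qed
  then show ?thesis unfolding inv_def T_def[symmetric] using fV eV by blast
qed

theorem theorem6:
  fixes D a :: int
  shows "\<exists>T::nat. \<forall>(V::'a set) E.
     clique_sum_of (\<lambda>V' E'. int (card {v \<in> V'. int (degree E' v) > D}) \<le> a) V E
     \<longrightarrow> inf_admissibility V E \<le> T"
proof (intro exI allI impI)
  define T where "T = 2*nat D + 2*nat a + 1"
  fix V :: "'a set" and E
  assume cs: "clique_sum_of (\<lambda>V' E'. int (card {v \<in> V'. int (degree E' v) > D}) \<le> a) V E"
  have "inv T V E" using cs
  proof (induction rule: clique_sum_of.induct)
    case (base V E) then show ?case unfolding T_def by (rule inv_base)
  next
    case (sum V1 E1 V2 E2 K F) then show ?case using inv_sum by blast
  qed
  then obtain Es where fV: "finite V" and eE: "E \<subseteq> Es" and gd: "good T V Es {}"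
    unfolding inv_def is_clique_def by blast
  then obtain vs where ord: "is_ordering V vs" and b: "\<forall>k<length vs. backconn V Es vs k \<le> T"
    unfolding good_def by auto
  have dvs: "distinct vs" using ord unfolding is_ordering_def by auto
  have b2: "backconn V E vs k \<le> T" if k: "k < length vs" for k
  proof -
    have "backconn V E vs k \<le> backconn V Es vs k"
      by (rule backconn_le[OF _ dvs k]) (rule backconn_ge[OF fan_mono[OF _ eE] dvs k])
    then show ?thesis using b k by auto
  qed
  have "adm_ordering V E vs \<le> T"
  proof -
    have "{backconn V E vs k | k. k < length vs} = (backconn V E vs) ` {..<length vs}" by auto
    then have "finite (insert 0 {backconn V E vs k | k. k < length vs})" by simp
    then show ?thesis unfolding adm_ordering_def using b2 by (subst Max_le_iff) auto
  qed
  moreover have "inf_admissibility V E \<le> adm_ordering V E vs"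
  proof -
    have "{adm_ordering V E vs | vs. is_ordering V vs} \<subseteq>
       (adm_ordering V E) ` {xs. set xs \<subseteq> V \<and> length xs \<le> card V}"
      unfolding is_ordering_def by (auto simp: distinct_card)
    moreover have "finite {xs. set xs \<subseteq> V \<and> length xs \<le> card V}"
      using fV by (rule finite_lists_length_le)
    ultimately have "finite {adm_ordering V E vs | vs. is_ordering V vs}"
      using finite_subset by blast
    then show ?thesis unfolding inf_admissibility_def using ord by (intro Min_le) auto
  qed
  ultimately show "inf_admissibility V E \<le> T" unfolding T_def by linarith
qed

end
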